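(* Let $F:\mathcal{G}_{\Sigma,\Delta,\pi}\to\mathcal{G}_{\Sigma,\Delta,\pi}$ be a causal graph dynamics with local rule $f:\mathcal{D}^r_{\Sigma,\Delta,\pi}\to\mathcal{G}_{\Sigma,\Delta,\pi}$ of radius $r$ (i.e. $F(G)=\bigcup_{v\in V(G)} f(G^r_v)$ for all $G$). If $f$ is monotonic (from the subdisk order to the subgraph order), then $F$ is the pointwise left Kan extension of $f$ along the pointer dropping function $i:\mathcal{D}^r_{\Sigma,\Delta,\pi}\to\mathcal{G}_{\Sigma,\Delta,\pi}$, $i((H,c))=H$; that is, for every graph $G$, the set $\{f(D)\mid D\in\mathcal{D}^r_{\Sigma,\Delta,\pi},\ i(D)\subseteq G\}$ has a supremum in $(\mathcal{G}_{\Sigma,\Delta,\pi},\subseteq)$ and this supremum equals $F(G)$.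
   Context: Fix an uncountably infinite set $\mathcal{V}$ of vertex names, sets $\Sigma,\Delta$ and a finite set $\pi$ of ports. A graph $G$ (with states in $\Sigma,\Delta$ and ports in $\pi$) consists of a countable set $V(G)\subset\mathcal{V}$; a set $E(G)$ of two-element subsets of $V(G)\times\pi$ that are pairwise disjoint (each $u\!:\!i:=(u,i)$ lies in at most one edge); partial functions $\sigma(G):V(G)\rightharpoonup\Sigma$ and $\delta(G):E(G)\rightharpoonup\Delta$. $\mathcal{G}_{\Sigma,\Delta,\pi}$ is the set of such graphs; a pointed graph is $(G,v)$ with $v\in V(G)$. Subgraph order: $G\subseteq H$ iff $V(G)\subseteq V(H)$, $E(G)\subseteq E(H)$, $\sigma(G)\subseteq\sigma(H)$, $\delta(G)\subseteq\delta(H)$ (partial functions viewed as sets of input–output pairs); on pointed graphs $(G,v)\subseteq(H,u)$ iff $G\subseteq H$ and $v=u$ (restricted to disks: subdisk order). Two graphs are consistent if $E(G)\cup E(H)$ consists of pairwise disjoint two-element sets and $\sigma(G),\sigma(H)$ agree where both are defined, and likewise $\delta(G),\delta(H)$; then $G\cup H$ is the componentwise union. The empty graph is $\varnothing$. Distance $d_G(u,v)$ is the length of a shortest path, a path being a sequence of vertices with consecutive vertices joined by an edge (through some ports); $B_G(c,r)=\{u\in V(G)\mid d_G(c,u)\le r\}$. The disk of radius $r$ and center $c\in V(G)$ is the pointed graph $G^r_c=(H,c)$ with $V(H)=B_G(c,r+1)$, $E(H)=\{\{u\!:\!i,v\!:\!j\}\in E(G)\mid \{u,v\}\cap B_G(c,r)\neq\emptyset\}$,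 $\sigma(H)=\sigma(G)$ restricted to $B_G(c,r)$, $\delta(H)=\delta(G)$ restricted to $E(H)$. $\mathcal{D}^r_{\Sigma,\Delta,\pi}=\{G^r_c\mid G\in\mathcal{G}_{\Sigma,\Delta,\pi},c\in V(G)\}$. A renaming is a bijection $R:\mathcal{V}\to\mathcal{V}$ acting on edges by $R(\{u\!:\!i,v\!:\!j\})=\{R(u)\!:\!i,R(v)\!:\!j\}$, on graphs by $V(R(G))=R(V(G))$, $E(R(G))=R(E(G))$, $\sigma(R(G))=\sigma(G)\circ R^{-1}$, $\delta(R(G))=\delta(G)\circ R^{-1}$, and on pointed graphs by $R(G,v)=(R(G),R(v))$. A local rule of radius $r$ is a function $f:\mathcal{D}^r_{\Sigma,\Delta,\pi}\to\mathcal{G}_{\Sigma,\Delta,\pi}$ such that (1) for every renaming $R$ there is a renaming $R'$ with $f\circ R=R'\circ f$; (2) for every family $(H_k,v_k)_k$ of radius-$r$ disks with $\bigcap_k H_k=\varnothing$, $\bigcap_k f((H_k,v_k))=\varnothing$ (intersection componentwise); (3) there is $b$ with $|V(f(D))|\le b$ for all $D$; (4) for every $G$ and $u,v\in V(G)$, $f(G^r_u)$ and $f(G^r_v)$ are consistent. A causal graph dynamics (CGD) is a map $F:\mathcal{G}_{\Sigma,\Delta,\pi}\to\mathcal{G}_{\Sigma,\Delta,\pi}$ for which there exist $r$ and a local rule $f$ of radius $r$ with $F(G)=\bigcup_{v\in V(G)}f(G^r_v)$ for all $G$. *)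

theory Defs
  imports "HOL-Library.Countable_Set"
begin

text \<open>Graphs with vertex names in 'v, vertex states in 's, edge states in 'd, ports in the
finite type 'p. The partial functions sigma and delta are represented as sets of
input-output pairs (their graphs); well-formedness requires them to be single-valued.\<close>

record ('v, 's, 'd, 'p) graph =
  gV :: "'v set"
  gE :: "('v \<times> 'p) set set"
  gsig :: "('v \<times> 's) set"
  gdel :: "(('v \<times> 'p) set \<times> 'd) set"

definition two_elem :: "'a set \<Rightarrow> bool" where
  "two_elem e \<longleftrightarrow> (\<exists>a b. a \<noteq> b \<and> e = {a, b})"

definition wf_graph :: "('v, 's, 'd, 'p::finite) graph \<Rightarrow> bool" where
  "wf_graph G \<longleftrightarrow>
     countable (gV G)
   \<and> (\<forall>e\<in>gE G. two_elem e \<and> e \<subseteq> gV G \<times> UNIV)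
   \<and> (\<forall>e1\<in>gE G. \<forall>e2\<in>gE G. e1 \<noteq> e2 \<longrightarrow> e1 \<inter> e2 = {})
   \<and> single_valued (gsig G) \<and> Domain (gsig G) \<subseteq> gV G
   \<and> single_valued (gdel G) \<and> Domain (gdel G) \<subseteq> gE G"

definition graph_le :: "('v, 's, 'd, 'p) graph \<Rightarrow> ('v, 's, 'd, 'p) graph \<Rightarrow> bool" where
  "graph_le G H \<longleftrightarrow> gV G \<subseteq> gV H \<and> gE G \<subseteq> gE H \<and> gsig G \<subseteq> gsig H \<and> gdel G \<subseteq> gdel H"

definition pgraph_le :: "('v, 's, 'd, 'p) graph \<times> 'v \<Rightarrow> ('v, 's, 'd, 'p) graph \<times> 'v \<Rightarrow> bool" where
  "pgraph_le D1 D2 \<longleftrightarrow> graph_le (fst D1) (fst D2) \<and> snd D1 = snd D2"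

definition empty_graph :: "('v, 's, 'd, 'p) graph" where
  "empty_graph = \<lparr>gV = {}, gE = {}, gsig = {}, gdel = {}\<rparr>"

definition graph_Union :: "('v, 's, 'd, 'p) graph set \<Rightarrow> ('v, 's, 'd, 'p) graph" where
  "graph_Union S = \<lparr>gV = \<Union>(gV ` S), gE = \<Union>(gE ` S), gsig = \<Union>(gsig ` S), gdel = \<Union>(gdel ` S)\<rparr>"

definition graph_Inter :: "('v, 's, 'd, 'p) graph set \<Rightarrow> ('v, 's, 'd, 'p) graph" where
  "graph_Inter S = \<lparr>gV = \<Inter>(gV ` S), gE = \<Inter>(gE ` S), gsig = \<Inter>(gsig ` S), gdel = \<Inter>(gdel ` S)\<rparr>"

definition consistent :: "('v, 's, 'd, 'p) graph \<Rightarrow> ('v, 's, 'd, 'p) graph \<Rightarrow> bool" where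
  "consistent G H \<longleftrightarrow>
     (\<forall>e\<in>gE G \<union> gE H. two_elem e)
   \<and> (\<forall>e1\<in>gE G \<union> gE H. \<forall>e2\<in>gE G \<union> gE H. e1 \<noteq> e2 \<longrightarrow> e1 \<inter> e2 = {})
   \<and> (\<forall>x a b. (x, a) \<in> gsig G \<longrightarrow> (x, b) \<in> gsig H \<longrightarrow> a = b)
   \<and> (\<forall>x a b. (x, a) \<in> gdel G \<longrightarrow> (x, b) \<in> gdel H \<longrightarrow> a = b)"

definition adj :: "('v, 's, 'd, 'p) graph \<Rightarrow> 'v \<Rightarrow> 'v \<Rightarrow> bool" where
  "adj G u v \<longleftrightarrow> (\<exists>i j. {(u, i), (v, j)} \<in> gE G)"

definition gball :: "('v, 's, 'd, 'p) graph \<Rightarrow> 'v \<Rightarrow> nat \<Rightarrow> 'v set" where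
  "gball G c r = {u \<in> gV G. \<exists>k\<le>r. (c, u) \<in> {(x, y). adj G x y} ^^ k}"

definition disk :: "('v, 's, 'd, 'p) graph \<Rightarrow> nat \<Rightarrow> 'v \<Rightarrow> ('v, 's, 'd, 'p) graph \<times> 'v" where
  "disk G r c =
    (let Er = {e \<in> gE G. \<exists>u i v j. e = {(u, i), (v, j)} \<and> (u \<in> gball G c r \<or> v \<in> gball G c r)}
     in (\<lparr>gV = gball G c (Suc r), gE = Er,
          gsig = {p \<in> gsig G. fst p \<in> gball G c r},
          gdel = {p \<in> gdel G. fst p \<in> Er}\<rparr>, c))"

definition disks :: "nat \<Rightarrow> (('v, 's, 'd, 'p::finite) graph \<times> 'v) set" where
  "disks r = {disk G r c | G c. wf_graph G \<and> c \<in> gV G}"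

definition rename_edge :: "('v \<Rightarrow> 'v) \<Rightarrow> ('v \<times> 'p) set \<Rightarrow> ('v \<times> 'p) set" where
  "rename_edge R e = (\<lambda>(u, i). (R u, i)) ` e"

definition rename_graph :: "('v \<Rightarrow> 'v) \<Rightarrow> ('v, 's, 'd, 'p) graph \<Rightarrow> ('v, 's, 'd, 'p) graph" where
  "rename_graph R G = \<lparr>gV = R ` gV G, gE = rename_edge R ` gE G,
      gsig = (\<lambda>(v, s). (R v, s)) ` gsig G,
      gdel = (\<lambda>(e, d). (rename_edge R e, d)) ` gdel G\<rparr>"

definition rename_pointed :: "('v \<Rightarrow> 'v) \<Rightarrow> ('v, 's, 'd, 'p) graph \<times> 'v \<Rightarrow> ('v, 's, 'd, 'p) graph \<times> 'v" where
  "rename_pointed R D = (rename_graph R (fst D), R (snd D))"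

definition local_rule :: "nat \<Rightarrow> (('v, 's, 'd, 'p::finite) graph \<times> 'v \<Rightarrow> ('v, 's, 'd, 'p) graph) \<Rightarrow> bool" where
  "local_rule r f \<longleftrightarrow>
     (\<forall>D\<in>disks r. wf_graph (f D))
   \<and> (\<forall>R. bij R \<longrightarrow> (\<exists>R'. bij R' \<and> (\<forall>D\<in>disks r. f (rename_pointed R D) = rename_graph R' (f D))))
   \<and> (\<forall>S. S \<subseteq> disks r \<longrightarrow> S \<noteq> {} \<longrightarrow> graph_Inter (fst ` S) = empty_graph
          \<longrightarrow> graph_Inter (f ` S) = empty_graph)
   \<and> (\<exists>b::nat. \<forall>D\<in>disks r. finite (gV (f D)) \<and> card (gV (f D)) \<le> b)
   \<and> (\<forall>G u v. wf_graph G \<longrightarrow> u \<in> gV G \<longrightarrow> v \<in> gV G \<longrightarrow> consistent (f (disk G r u)) (f (disk G r v)))"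

definition is_graph_sup :: "('v, 's, 'd, 'p::finite) graph set \<Rightarrow> ('v, 's, 'd, 'p) graph \<Rightarrow> bool" where
  "is_graph_sup S X \<longleftrightarrow> wf_graph X \<and> (\<forall>Y\<in>S. graph_le Y X)
     \<and> (\<forall>Z. wf_graph Z \<longrightarrow> (\<forall>Y\<in>S. graph_le Y Z) \<longrightarrow> graph_le X Z)"

end

theory Submission
  imports Defs
begin

lemma relpow_sub:
  assumes wf: "wf_graph H" and le: "graph_le (fst (disk H r c)) G"
  shows "k \<le> Suc r \<Longrightarrow> (c,u) \<in> {(x,y). adj H x y}^^k \<Longrightarrow> (c,u) \<in> {(x,y). adj G x y}^^k"
proof (induction k arbitrary: u)
  case 0 then show ?case by simp
next
  case (Suc k)
  from Suc.prems(2) obtain x where cx: "(c,x) \<in> {(x,y). adj H x y}^^k" and xu0: "(x,u) \<in> {(x,y). adj H x y}"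
    by (meson relpow_Suc_E)
  from xu0 have xu: "adj H x u" by simp
  then obtain i j where e: "{(x,i),(u,j)} \<in> gE H" unfolding adj_def by blast
  have "\<forall>e\<in>gE H. e \<subseteq> gV H \<times> UNIV" using wf unfolding wf_graph_def by blast
  hence "{(x,i),(u,j)} \<subseteq> gV H \<times> UNIV" using e by blast
  hence xV: "x \<in> gV H" by blast
  have kr: "k \<le> r" using Suc.prems(1) by simp
  have xb: "x \<in> gball H c r" unfolding gball_def using cx xV kr by blast
  have "{(x,i),(u,j)} \<in> gE (fst (disk H r c))"
    unfolding disk_def Let_def fst_conv graph.select_convs using e xb by blast
  hence "{(x,i),(u,j)} \<in> gE G" using le unfolding graph_le_def by blast
  hence "adj G x u" unfolding adj_def by blast
  moreover have "(c,x) \<in> {(x,y). adj G x y}^^k" using Suc.IH[OF _ cx] Suc.prems(1) by simp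
  ultimately show ?case by (intro relpow_Suc_I[of c x k _ u]) simp_all
qed

lemma gball_sub:
  assumes wf: "wf_graph H" and le: "graph_le (fst (disk H r c)) G" and k: "k \<le> Suc r"
  shows "gball H c k \<subseteq> gball G c k"
proof
  fix u assume u: "u \<in> gball H c k"
  then obtain m where m: "m \<le> k" "(c,u) \<in> {(x,y). adj H x y}^^m" "u \<in> gV H" unfolding gball_def by auto
  have "u \<in> gball H c (Suc r)" using m k unfolding gball_def by (intro CollectI conjI exI[of _ m]) auto
  hence "u \<in> gV G" using le by (auto simp: graph_le_def disk_def Let_def)
  moreover have "(c,u) \<in> {(x,y). adj G x y}^^m" using relpow_sub[OF wf le] m k by auto
  ultimately show "u \<in> gball G c k" using m unfolding gball_def by auto
qed

lemma disk_mono: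
  assumes wf: "wf_graph H" and le: "graph_le (fst (disk H r c)) G"
  shows "graph_le (fst (disk H r c)) (fst (disk G r c))"
proof -
  have b1: "gball H c (Suc r) \<subseteq> gball G c (Suc r)" using gball_sub[OF wf le] by auto
  have b0: "gball H c r \<subseteq> gball G c r" using gball_sub[OF wf le] by auto
  have E: "gE (fst (disk H r c)) \<subseteq> gE (fst (disk G r c))"
  proof
    fix e assume e: "e \<in> gE (fst (disk H r c))"
    hence eG: "e \<in> gE G" using le by (auto simp: graph_le_def)
    from e obtain u i v j where "e = {(u, i), (v, j)}" "u \<in> gball H c r \<or> v \<in> gball H c r"
      by (auto simp: disk_def Let_def)
    thus "e \<in> gE (fst (disk G r c))" using eG b0 by (auto simp: disk_def Let_def)
  qed
  have S: "gsig (fst (disk H r c)) \<subseteq> gsig (fst (disk G r c))"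
  proof
    fix p assume p: "p \<in> gsig (fst (disk H r c))"
    hence "p \<in> gsig G" using le by (auto simp: graph_le_def)
    moreover have "fst p \<in> gball H c r" using p by (auto simp: disk_def Let_def)
    ultimately show "p \<in> gsig (fst (disk G r c))" using b0 by (auto simp: disk_def Let_def)
  qed
  have D: "gdel (fst (disk H r c)) \<subseteq> gdel (fst (disk G r c))"
  proof
    fix p assume p: "p \<in> gdel (fst (disk H r c))"
    hence "p \<in> gdel G" using le by (auto simp: graph_le_def)
    moreover have "fst p \<in> gE (fst (disk H r c))" using p by (auto simp: disk_def Let_def)
    hence "fst p \<in> gE (fst (disk G r c))" using E by auto
    ultimately show "p \<in> gdel (fst (disk G r c))" by (auto simp: disk_def Let_def)
  qed
  have V: "gV (fst (disk H r c)) \<subseteq> gV (fst (disk G r c))" using b1 by (simp add: disk_def Let_def)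
  show ?thesis using V E S D by (simp add: graph_le_def)
qed

lemma disk_le:
  "graph_le (fst (disk G r c)) G"
  by (auto simp: graph_le_def disk_def Let_def gball_def)

lemma le_Union: "Y \<in> U \<Longrightarrow> graph_le Y (graph_Union U)"
  by (auto simp: graph_le_def graph_Union_def)

lemma Union_le: "\<forall>Y\<in>U. graph_le Y Z \<Longrightarrow> graph_le (graph_Union U) Z"
  by (auto simp: graph_le_def graph_Union_def)

lemma le_trans': "graph_le A B \<Longrightarrow> graph_le B C \<Longrightarrow> graph_le A C"
  by (auto simp: graph_le_def)

lemma wf_Union:
  assumes wf: "\<forall>Y\<in>U. wf_graph Y" and cU: "countable U" and fin: "\<forall>Y\<in>U. finite (gV Y)"
    and con: "\<forall>Y1\<in>U. \<forall>Y2\<in>U. consistent Y1 Y2"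
  shows "wf_graph (graph_Union U)"
proof -
  have gv: "gV (graph_Union U) = \<Union>(gV ` U)" and ge: "gE (graph_Union U) = \<Union>(gE ` U)"
    and gs: "gsig (graph_Union U) = \<Union>(gsig ` U)" and gd: "gdel (graph_Union U) = \<Union>(gdel ` U)"
    by (simp_all add: graph_Union_def)
  have c1: "countable (gV (graph_Union U))" unfolding gv
    using cU fin by (intro countable_UN) (auto intro: countable_finite)
  have c2: "\<forall>e\<in>gE (graph_Union U). two_elem e \<and> e \<subseteq> gV (graph_Union U) \<times> UNIV"
  proof
    fix e assume "e \<in> gE (graph_Union U)"
    then obtain Y where Y: "Y \<in> U" "e \<in> gE Y" unfolding ge by blast
    have "two_elem e \<and> e \<subseteq> gV Y \<times> UNIV" using wf Y unfolding wf_graph_def by blast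
    moreover have "gV Y \<subseteq> gV (graph_Union U)" unfolding gv using Y by blast
    ultimately show "two_elem e \<and> e \<subseteq> gV (graph_Union U) \<times> UNIV" by blast
  qed
  have c3: "\<forall>e1\<in>gE (graph_Union U). \<forall>e2\<in>gE (graph_Union U). e1 \<noteq> e2 \<longrightarrow> e1 \<inter> e2 = {}"
  proof (intro ballI impI)
    fix e1 e2 assume "e1 \<in> gE (graph_Union U)" "e2 \<in> gE (graph_Union U)" "e1 \<noteq> e2"
    then obtain Y1 Y2 where "Y1 \<in> U" "e1 \<in> gE Y1" "Y2 \<in> U" "e2 \<in> gE Y2" unfolding ge by blast
    moreover have "consistent Y1 Y2" using con \<open>Y1 \<in> U\<close> \<open>Y2 \<in> U\<close> by blast
    ultimately show "e1 \<inter> e2 = {}" using \<open>e1 \<noteq> e2\<close> unfolding consistent_def by blast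
  qed
  have c4: "single_valued (gsig (graph_Union U))"
  proof (rule single_valuedI)
    fix x y z assume "(x,y) \<in> gsig (graph_Union U)" "(x,z) \<in> gsig (graph_Union U)"
    then obtain Y1 Y2 where "Y1 \<in> U" "(x,y) \<in> gsig Y1" "Y2 \<in> U" "(x,z) \<in> gsig Y2" unfolding gs by blast
    moreover have "consistent Y1 Y2" using con \<open>Y1 \<in> U\<close> \<open>Y2 \<in> U\<close> by blast
    ultimately show "y = z" unfolding consistent_def by blast
  qed
  have c5: "single_valued (gdel (graph_Union U))"
  proof (rule single_valuedI)
    fix x y z assume "(x,y) \<in> gdel (graph_Union U)" "(x,z) \<in> gdel (graph_Union U)"
    then obtain Y1 Y2 where "Y1 \<in> U" "(x,y) \<in> gdel Y1" "Y2 \<in> U" "(x,z) \<in> gdel Y2" unfolding gd by blast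
    moreover have "consistent Y1 Y2" using con \<open>Y1 \<in> U\<close> \<open>Y2 \<in> U\<close> by blast
    ultimately show "y = z" unfolding consistent_def by blast
  qed
  have c6: "Domain (gsig (graph_Union U)) \<subseteq> gV (graph_Union U)"
  proof
    fix x assume "x \<in> Domain (gsig (graph_Union U))"
    then obtain y Y where Y: "Y \<in> U" "(x,y) \<in> gsig Y" unfolding gs by blast
    have "Domain (gsig Y) \<subseteq> gV Y" using wf Y unfolding wf_graph_def by blast
    thus "x \<in> gV (graph_Union U)" unfolding gv using Y by blast
  qed
  have c7: "Domain (gdel (graph_Union U)) \<subseteq> gE (graph_Union U)"
  proof
    fix x assume "x \<in> Domain (gdel (graph_Union U))"
    then obtain y Y where Y: "Y \<in> U" "(x,y) \<in> gdel Y" unfolding gd by blast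
    have "Domain (gdel Y) \<subseteq> gE Y" using wf Y unfolding wf_graph_def by blast
    thus "x \<in> gE (graph_Union U)" unfolding ge using Y by blast
  qed
  show ?thesis unfolding wf_graph_def using c1 c2 c3 c4 c5 c6 c7 by blast
qed

theorem proposition2p8:
  fixes F :: "('v, 's, 'd, 'p::finite) graph \<Rightarrow> ('v, 's, 'd, 'p) graph"
    and f :: "('v, 's, 'd, 'p) graph \<times> 'v \<Rightarrow> ('v, 's, 'd, 'p) graph"
    and r :: nat
  assumes "uncountable (UNIV :: 'v set)"
    and "local_rule r f"
    and "\<forall>G. wf_graph G \<longrightarrow> F G = graph_Union ((\<lambda>v. f (disk G r v)) ` gV G)"
    and "\<forall>D1\<in>disks r. \<forall>D2\<in>disks r. pgraph_le D1 D2 \<longrightarrow> graph_le (f D1) (f D2)"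
  shows "\<forall>G. wf_graph G \<longrightarrow>
           is_graph_sup {f D | D. D \<in> disks r \<and> graph_le (fst D) G} (F G)"
proof (intro allI impI)
  fix G :: "('v, 's, 'd, 'p) graph"
  assume wG: "wf_graph G"
  define U where "U = (\<lambda>v. f (disk G r v)) ` gV G"
  have FG: "F G = graph_Union U" using assms(3) wG U_def by simp
  have lr: "\<forall>D\<in>disks r. wf_graph (f D)"
    "\<exists>b::nat. \<forall>D\<in>disks r. finite (gV (f D)) \<and> card (gV (f D)) \<le> b"
    "\<forall>G u v. wf_graph G \<longrightarrow> u \<in> gV G \<longrightarrow> v \<in> gV G \<longrightarrow> consistent (f (disk G r u)) (f (disk G r v))"
    using assms(2) unfolding local_rule_def by blast+
  have dG: "\<And>v. v \<in> gV G \<Longrightarrow> disk G r v \<in> disks r" using wG unfolding disks_def by blast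
  have US: "U \<subseteq> {f D | D. D \<in> disks r \<and> graph_le (fst D) G}"
  proof
    fix Y assume "Y \<in> U"
    then obtain v where v: "v \<in> gV G" "Y = f (disk G r v)" unfolding U_def by blast
    show "Y \<in> {f D | D. D \<in> disks r \<and> graph_le (fst D) G}"
      using v dG[OF v(1)] disk_le[of G r v] by blast
  qed
  have wU: "wf_graph (graph_Union U)"
  proof (rule wf_Union)
    show "\<forall>Y\<in>U. wf_graph Y" unfolding U_def using dG lr(1) by simp
    show "countable U" unfolding U_def using wG unfolding wf_graph_def by simp
    show "\<forall>Y\<in>U. finite (gV Y)" unfolding U_def using dG lr(2) by auto
    show "\<forall>Y1\<in>U. \<forall>Y2\<in>U. consistent Y1 Y2" unfolding U_def using lr(3) wG by simp
  qed
  have ub: "\<forall>Y\<in>{f D | D. D \<in> disks r \<and> graph_le (fst D) G}. graph_le Y (graph_Union U)"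
  proof
    fix Y assume "Y \<in> {f D | D. D \<in> disks r \<and> graph_le (fst D) G}"
    then obtain D where Y: "Y = f D" and D: "D \<in> disks r" "graph_le (fst D) G" by blast
    then obtain H c where H: "D = disk H r c" "wf_graph H" "c \<in> gV H" unfolding disks_def by blast
    have "c \<in> gball H c (Suc r)" using H unfolding gball_def by force
    hence cG: "c \<in> gV G" using D H by (auto simp: graph_le_def disk_def Let_def)
    have "pgraph_le D (disk G r c)" using disk_mono[OF H(2)] D H
      by (simp add: pgraph_le_def disk_def Let_def)
    hence "graph_le Y (f (disk G r c))" using assms(4) D dG[OF cG] Y by blast
    moreover have "f (disk G r c) \<in> U" using cG U_def by blast
    ultimately show "graph_le Y (graph_Union U)" using le_Union le_trans' by blast
  qed
  show "is_graph_sup {f D | D. D \<in> disks r \<and> graph_le (fst D) G} (F G)"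
    unfolding is_graph_sup_def FG
  proof (intro conjI allI impI)
    fix Z :: "('v, 's, 'd, 'p) graph"
    assume "\<forall>Y\<in>{f D | D. D \<in> disks r \<and> graph_le (fst D) G}. graph_le Y Z"
    hence "\<forall>Y\<in>U. graph_le Y Z" using US by (meson subsetD)
    thus "graph_le (graph_Union U) Z" by (rule Union_le)
  qed (fact wU, fact ub)
qed

end
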